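(* Let $F$ be a semi-flow on a connected metrizable space $X$. Then $\mathcal{NW}_F$ is forward-invariant under the induced action $F^t(x,y)=(F^t(x),F^t(y))$ on $X\times X$. Moreover, for every $x\in X$: (1) $\mathrm{Down}_{\mathcal{NW}_F}(x)$ is forward-invariant under $F$; (2) $\mathrm{Down}_{\mathcal{NW}_F}(x)\supset\mathcal{O}_F(x)\cup\Omega_F(x)$; (3) if $\Omega_F(x)\neq\emptyset$, then $\mathcal{O}_F(x)\cup\mathrm{Down}_{\mathcal{NW}_F}(\Omega_F(x))\supset\mathrm{Down}_{\mathcal{NW}_F}(x)$; (4) $\mathcal{O}_F(x)\cup\mathrm{Down}_{\mathcal{NW}_F}(y)\supset\mathrm{Down}_{\mathcal{NW}_F}(x)$ for all $y\in\mathcal{O}_F(x)$; (5) if $F^t$ is an open map for every $t\ge0$, then $\mathrm{Down}_{\mathcal{NW}_F}(x)=\mathcal{O}_F(x)\cup\mathrm{Down}_{\mathcal{NW}_F}(y)$ for all $y\in\mathcal{O}_F(x)$.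
   Context: A semi-flow on $X$ is a continuous map $F:\mathbb{T}\times X\to X$, $(t,x)\mapsto F^t(x)$, where $\mathbb{T}=\{0,1,2,\dots\}$ or $[0,\infty)$, with $F^0=\mathrm{id}$ and $F^{t_1+t_2}=F^{t_2}\circ F^{t_1}$. Put $\mathcal{O}_F(x)=\{F^t(x):t\in\mathbb{T}\}$ and $\mathcal{O}_F=\{(x,y):y\in\mathcal{O}_F(x)\}$. $\Omega_F(x)$ is the set of $y$ with $F^{t_n}(x)\to y$ for some $t_n\to\infty$. The non-wandering relation $\mathcal{NW}_F$ is the closure of $\mathcal{O}_F$ in $X\times X$. For a relation $D$, $\mathrm{Down}_D(x)=\{y:(x,y)\in D\}$ and $\mathrm{Down}_D(M)=\bigcup_{x\in M}\mathrm{Down}_D(x)$. A set $A$ is forward-invariant under $F$ if $F^t(A)\subset A$ for all $t$. *)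

theory Defs
  imports "HOL-Analysis.Analysis"
begin

text \<open>Time set: either the naturals (embedded in the reals) or [0,\<infinity>).
  A semi-flow is represented by F :: real => 'a => 'a; only its values on the time set T matter.\<close>

definition time_set :: "real set \<Rightarrow> bool" where
  "time_set T \<longleftrightarrow> T = range real \<or> T = {0..}"

definition semiflow :: "real set \<Rightarrow> (real \<Rightarrow> 'a::topological_space \<Rightarrow> 'a) \<Rightarrow> bool" where
  "semiflow T F \<longleftrightarrow> time_set T
     \<and> continuous_on (T \<times> UNIV) (\<lambda>(t, x). F t x)
     \<and> F 0 = id
     \<and> (\<forall>t1\<in>T. \<forall>t2\<in>T. F (t1 + t2) = F t2 \<circ> F t1)"

definition orbit :: "real set \<Rightarrow> (real \<Rightarrow> 'a \<Rightarrow> 'a) \<Rightarrow> 'a \<Rightarrow> 'a set" where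
  "orbit T F x = {F t x | t. t \<in> T}"

definition orbit_rel :: "real set \<Rightarrow> (real \<Rightarrow> 'a \<Rightarrow> 'a) \<Rightarrow> ('a \<times> 'a) set" where
  "orbit_rel T F = {(x, y). y \<in> orbit T F x}"

definition omega_limit :: "real set \<Rightarrow> (real \<Rightarrow> 'a::topological_space \<Rightarrow> 'a) \<Rightarrow> 'a \<Rightarrow> 'a set" where
  "omega_limit T F x = {y. \<exists>s :: nat \<Rightarrow> real. (\<forall>n. s n \<in> T) \<and> filterlim s at_top sequentially
                          \<and> (\<lambda>n. F (s n) x) \<longlonglongrightarrow> y}"

definition nonwandering_rel :: "real set \<Rightarrow> (real \<Rightarrow> 'a::topological_space \<Rightarrow> 'a) \<Rightarrow> ('a \<times> 'a) set" where
  "nonwandering_rel T F = closure (orbit_rel T F)"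

definition Down :: "('a \<times> 'b) set \<Rightarrow> 'a \<Rightarrow> 'b set" where
  "Down D x = {y. (x, y) \<in> D}"

definition Down_set :: "('a \<times> 'b) set \<Rightarrow> 'a set \<Rightarrow> 'b set" where
  "Down_set D M = (\<Union>x\<in>M. Down D x)"

definition forward_invariant :: "real set \<Rightarrow> (real \<Rightarrow> 'a \<Rightarrow> 'a) \<Rightarrow> 'a set \<Rightarrow> bool" where
  "forward_invariant T F A \<longleftrightarrow> (\<forall>t\<in>T. F t ` A \<subseteq> A)"

definition prod_action :: "(real \<Rightarrow> 'a \<Rightarrow> 'a) \<Rightarrow> real \<Rightarrow> 'a \<times> 'a \<Rightarrow> 'a \<times> 'a" where
  "prod_action F t = (\<lambda>(x, y). (F t x, F t y))"

end

theory Submission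
  imports Defs
begin

lemma sf_Tcases: "semiflow T F \<Longrightarrow> T = range real \<or> T = {0..}"
  by (simp add: semiflow_def time_set_def)

lemma sf_T0: "semiflow T F \<Longrightarrow> 0 \<in> T"
proof -
  assume "semiflow T F"
  then have "T = range real \<or> T = {0..}" by (rule sf_Tcases)
  moreover have "(0::real) \<in> range real" by (rule range_eqI[of _ _ 0]) simp
  ultimately show ?thesis by auto
qed

lemma sf_Tadd: "semiflow T F \<Longrightarrow> s \<in> T \<Longrightarrow> t \<in> T \<Longrightarrow> s + t \<in> T"
  apply (drule sf_Tcases)
  apply (elim disjE)
   apply (clarsimp, rule range_eqI, rule of_nat_add[symmetric])
  by auto

lemma sf_Tdiff: "semiflow T F \<Longrightarrow> s \<in> T \<Longrightarrow> t \<in> T \<Longrightarrow> s \<le> t \<Longrightarrow> t - s \<in> T"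
  apply (drule sf_Tcases)
  apply (elim disjE)
  subgoal
  proof -
    assume T: "T = range real" and st: "s \<in> T" "t \<in> T" "s \<le> t"
    then obtain m n where mn: "s = real m" "t = real n" by auto
    then have "m \<le> n" using st by simp
    then have "t - s = real (n - m)" using mn by (simp add: of_nat_diff)
    then show ?thesis using T by simp
  qed
  by auto

lemma sf_Tpos: "semiflow T F \<Longrightarrow> t \<in> T \<Longrightarrow> t \<ge> 0"
  apply (drule sf_Tcases)
  by auto

lemma sf_comp:
  assumes "semiflow T F" "s \<in> T" "t \<in> T"
  shows "F t (F s x) = F (s + t) x"
proof -
  have "\<forall>t1\<in>T. \<forall>t2\<in>T. F (t1 + t2) = F t2 \<circ> F t1" using assms(1) unfolding semiflow_def by blast
  then have "F (s + t) = F t \<circ> F s" using assms(2,3) by blast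
  then show ?thesis by simp
qed

lemma sf_seq:
  fixes F :: "real \<Rightarrow> 'a::metric_space \<Rightarrow> 'a"
  assumes "semiflow T F" "\<And>n. tt n \<in> T" "tt \<longlonglongrightarrow> t" "t \<in> T" "xx \<longlonglongrightarrow> x"
  shows "(\<lambda>n. F (tt n) (xx n)) \<longlonglongrightarrow> F t x"
proof -
  have c: "continuous_on (T \<times> UNIV) (\<lambda>(t, x). F t x)" using assms(1) by (simp add: semiflow_def)
  have l: "(\<lambda>n. (tt n, xx n)) \<longlonglongrightarrow> (t, x)" by (rule tendsto_Pair[OF assms(3) assms(5)])
  have m: "(t, x) \<in> T \<times> UNIV" using assms(4) by simp
  have e: "\<forall>\<^sub>F n in sequentially. (tt n, xx n) \<in> T \<times> UNIV" using assms(2) by simp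
  have "((\<lambda>n. (\<lambda>(t, x). F t x) (tt n, xx n)) \<longlonglongrightarrow> (\<lambda>(t, x). F t x) (t, x))"
    by (rule continuous_on_tendsto_compose[OF c l m e])
  then show ?thesis by simp
qed

lemma sf_cont:
  assumes "semiflow T F" "t \<in> T"
  shows "continuous_on UNIV (F t)"
proof -
  have c: "continuous_on (T \<times> UNIV) (\<lambda>(t, x). F t x)" using assms(1) by (simp add: semiflow_def)
  have "continuous_on UNIV ((\<lambda>(t, x). F t x) \<circ> (\<lambda>x. (t, x)))"
  proof (rule continuous_on_compose)
    show "continuous_on UNIV (\<lambda>x. (t, x))" by (intro continuous_on_Pair continuous_on_const continuous_on_id)
    show "continuous_on ((\<lambda>x. (t, x)) ` UNIV) (\<lambda>(t, x). F t x)"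
      by (rule continuous_on_subset[OF c]) (use assms(2) in auto)
  qed
  then show ?thesis by (simp add: o_def)
qed

lemma sf_compact:
  assumes "semiflow T F"
  shows "compact (T \<inter> {..B})"
proof -
  have "T = range real \<or> T = {0..}" using assms by (simp add: semiflow_def time_set_def)
  then show ?thesis
  proof
    assume T: "T = range real"
    have "T \<inter> {..B} \<subseteq> real ` {..nat \<lceil>B\<rceil>}"
    proof
      fix t assume "t \<in> T \<inter> {..B}"
      then obtain n where n: "t = real n" "real n \<le> B" using T by auto
      then have "int n \<le> \<lceil>B\<rceil>" by linarith
      then have "n \<le> nat \<lceil>B\<rceil>" by linarith
      then show "t \<in> real ` {..nat \<lceil>B\<rceil>}" using n by auto
    qed
    then have "finite (T \<inter> {..B})" by (rule finite_subset) auto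
    then show ?thesis by (rule finite_imp_compact)
  next
    assume "T = {0..}"
    then have "T \<inter> {..B} = {0..B}" by auto
    then show ?thesis by simp
  qed
qed


lemma orbit_rel_iff: "(a, b) \<in> orbit_rel T F \<longleftrightarrow> (\<exists>t\<in>T. b = F t a)"
  by (auto simp: orbit_rel_def orbit_def)

lemma sf_commute:
  assumes "semiflow T F" "s \<in> T" "t \<in> T"
  shows "F t (F s x) = F s (F t x)"
  using sf_comp[OF assms] sf_comp[OF assms(1,3,2)] by (simp add: add.commute)

lemma NW_prod_inv:
  fixes F :: "real \<Rightarrow> 'a::metric_space \<Rightarrow> 'a"
  assumes sf: "semiflow T F" and t: "t \<in> T"
  shows "prod_action F t ` closure (orbit_rel T F) \<subseteq> closure (orbit_rel T F)"
proof (rule image_closure_subset)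
  have c: "continuous_on UNIV (F t)" by (rule sf_cont[OF sf t])
  have "prod_action F t = (\<lambda>p. (F t (fst p), F t (snd p)))"
    by (auto simp: prod_action_def)
  moreover have "continuous_on (closure (orbit_rel T F)) (\<lambda>p. (F t (fst p), F t (snd p)))"
    by (intro continuous_on_Pair continuous_on_compose2[OF c] continuous_on_fst continuous_on_snd continuous_on_id) auto
  ultimately show "continuous_on (closure (orbit_rel T F)) (prod_action F t)" by simp
  show "closed (closure (orbit_rel T F))" by simp
  show "prod_action F t ` orbit_rel T F \<subseteq> closure (orbit_rel T F)"
  proof
    fix p assume "p \<in> prod_action F t ` orbit_rel T F"
    then obtain a s where s: "s \<in> T" "p = (F t a, F t (F s a))"
      by (auto simp: orbit_rel_iff prod_action_def)
    then have "p \<in> orbit_rel T F" using sf_commute[OF sf s(1) t] s by (auto simp: orbit_rel_iff)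
    then show "p \<in> closure (orbit_rel T F)" using closure_subset by blast
  qed
qed

lemma NW_down_inv:
  fixes F :: "real \<Rightarrow> 'a::metric_space \<Rightarrow> 'a"
  assumes sf: "semiflow T F" and t: "t \<in> T"
  shows "(\<lambda>p. (fst p, F t (snd p))) ` closure (orbit_rel T F) \<subseteq> closure (orbit_rel T F)"
proof (rule image_closure_subset)
  have c: "continuous_on UNIV (F t)" by (rule sf_cont[OF sf t])
  show "continuous_on (closure (orbit_rel T F)) (\<lambda>p. (fst p, F t (snd p)))"
    by (intro continuous_on_Pair continuous_on_compose2[OF c] continuous_on_fst continuous_on_snd continuous_on_id) auto
  show "closed (closure (orbit_rel T F))" by simp
  show "(\<lambda>p. (fst p, F t (snd p))) ` orbit_rel T F \<subseteq> closure (orbit_rel T F)"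
  proof
    fix p assume "p \<in> (\<lambda>p. (fst p, F t (snd p))) ` orbit_rel T F"
    then obtain a s where s: "s \<in> T" "p = (a, F t (F s a))"
      by (auto simp: orbit_rel_iff)
    then have "p \<in> orbit_rel T F" using sf_comp[OF sf s(1) t] sf_Tadd[OF sf s(1) t] by (auto simp: orbit_rel_iff)
    then show "p \<in> closure (orbit_rel T F)" using closure_subset by blast
  qed
qed

lemma NW_key:
  fixes F :: "real \<Rightarrow> 'a::metric_space \<Rightarrow> 'a"
  assumes sf: "semiflow T F" and xy: "(x, y) \<in> closure (orbit_rel T F)"
  shows "y \<in> orbit T F x \<or> (\<forall>s\<in>T. (F s x, y) \<in> closure (orbit_rel T F))"
proof -
  obtain p where p: "\<And>n. p n \<in> orbit_rel T F" "p \<longlonglongrightarrow> (x, y)"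
    using xy unfolding closure_sequential by blast
  have "\<forall>n. \<exists>t. t \<in> T \<and> snd (p n) = F t (fst (p n))"
  proof
    fix n
    obtain a b where ab: "p n = (a, b)" by (cases "p n")
    then have "(a, b) \<in> orbit_rel T F" using p(1)[of n] by simp
    then obtain t where "t \<in> T" "b = F t a" unfolding orbit_rel_iff by blast
    then show "\<exists>t. t \<in> T \<and> snd (p n) = F t (fst (p n))" using ab by auto
  qed
  from choice[OF this] obtain tt where tt0: "\<forall>n. tt n \<in> T \<and> snd (p n) = F (tt n) (fst (p n))"
    by blast
  have tt: "\<And>n. tt n \<in> T" "\<And>n. snd (p n) = F (tt n) (fst (p n))" using tt0 by auto
  define xs where "xs = (\<lambda>n. fst (p n))"
  have xs: "xs \<longlonglongrightarrow> x" unfolding xs_def using tendsto_fst[OF p(2)] by simp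
  have ys0: "(\<lambda>n. snd (p n)) \<longlonglongrightarrow> y" using tendsto_snd[OF p(2)] by simp
  have "(\<lambda>n. snd (p n)) = (\<lambda>n. F (tt n) (xs n))" unfolding xs_def using tt(2) by simp
  with ys0 have ys: "(\<lambda>n. F (tt n) (xs n)) \<longlonglongrightarrow> y" by simp
  show ?thesis
  proof (cases "\<exists>B N. \<forall>n\<ge>N. tt n \<le> B")
    case True
    then obtain B N where BN: "\<And>n. n \<ge> N \<Longrightarrow> tt n \<le> B" by blast
    have sc: "seq_compact (T \<inter> {..B})" by (rule compact_imp_seq_compact[OF sf_compact[OF sf]])
    have inS: "\<forall>n. tt (n + N) \<in> T \<inter> {..B}" using tt(1) BN by simp
    obtain l r where lr: "l \<in> T \<inter> {..B}" "strict_mono r" "((\<lambda>n. tt (n + N)) \<circ> r) \<longlonglongrightarrow> l"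
      by (rule seq_compactE[OF sc inS])
    have x2: "((\<lambda>n. xs (n + N)) \<circ> r) \<longlonglongrightarrow> x"
      by (rule LIMSEQ_subseq_LIMSEQ[OF LIMSEQ_ignore_initial_segment[OF xs] lr(2)])
    have y2: "((\<lambda>n. F (tt (n + N)) (xs (n + N))) \<circ> r) \<longlonglongrightarrow> y"
      by (rule LIMSEQ_subseq_LIMSEQ[OF LIMSEQ_ignore_initial_segment[OF ys] lr(2)])
    have lT: "l \<in> T" using lr(1) by simp
    have tT: "\<And>n. ((\<lambda>n. tt (n + N)) \<circ> r) n \<in> T" using tt(1) by simp
    have y3: "(\<lambda>n. F (((\<lambda>n. tt (n + N)) \<circ> r) n) (((\<lambda>n. xs (n + N)) \<circ> r) n)) \<longlonglongrightarrow> F l x"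
      by (rule sf_seq[OF sf tT lr(3) lT x2])
    have "(\<lambda>n. F (((\<lambda>n. tt (n + N)) \<circ> r) n) (((\<lambda>n. xs (n + N)) \<circ> r) n))
        = ((\<lambda>n. F (tt (n + N)) (xs (n + N))) \<circ> r)" by (simp add: o_def)
    with y3 have y4: "((\<lambda>n. F (tt (n + N)) (xs (n + N))) \<circ> r) \<longlonglongrightarrow> F l x" by simp
    have "y = F l x" by (rule LIMSEQ_unique[OF y2 y4])
    then show ?thesis using lT unfolding orbit_def by blast
  next
    case False
    have unb: "\<exists>n\<ge>N. tt n > B" for B N
    proof (rule ccontr)
      assume "\<not> (\<exists>n\<ge>N. tt n > B)"
      then have "\<forall>n\<ge>N. tt n \<le> B" by (simp add: not_less)
      then show False using False by blast
    qed
    have "(F s x, y) \<in> closure (orbit_rel T F)" if s: "s \<in> T" for s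
      unfolding closure_iff_nhds_not_empty
    proof (intro allI impI)
      fix A S assume SA: "S \<subseteq> A" and S: "open S" and inS: "(F s x, y) \<in> S"
      have tc: "(\<lambda>n. s) \<longlonglongrightarrow> s" by (rule tendsto_const)
      have sx: "(\<lambda>n. F s (xs n)) \<longlonglongrightarrow> F s x" by (rule sf_seq[OF sf s tc s xs])
      have "(\<lambda>n. (F s (xs n), F (tt n) (xs n))) \<longlonglongrightarrow> (F s x, y)"
        by (rule tendsto_Pair[OF sx ys])
      from topological_tendstoD[OF this S inS] obtain N where
        N: "\<And>n. n \<ge> N \<Longrightarrow> (F s (xs n), F (tt n) (xs n)) \<in> S"
        unfolding eventually_sequentially by blast
      obtain n where n: "n \<ge> N" "tt n > s" using unb by blast
      have d: "tt n - s \<in> T" using sf_Tdiff[OF sf s tt(1)[of n]] n(2) by simp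
      have eq: "F (tt n) (xs n) = F (tt n - s) (F s (xs n))"
        using sf_comp[OF sf s d] by simp
      have "(F s (xs n), F (tt n) (xs n)) \<in> orbit_rel T F"
        unfolding orbit_rel_iff using eq d by (intro bexI[where x="tt n - s"])
      then show "orbit_rel T F \<inter> A \<noteq> {}" using N[OF n(1)] SA by blast
    qed
    then show ?thesis by blast
  qed
qed

lemma NW_open:
  fixes F :: "real \<Rightarrow> 'a::metric_space \<Rightarrow> 'a"
  assumes sf: "semiflow T F" and op: "\<forall>t\<in>T. \<forall>U. open U \<longrightarrow> open (F t ` U)"
    and s: "s \<in> T" and sw: "(F s x, w) \<in> closure (orbit_rel T F)"
  shows "(x, w) \<in> closure (orbit_rel T F)"
  unfolding closure_iff_nhds_not_empty
proof (intro allI impI)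
  fix A S assume SA: "S \<subseteq> A" and S: "open S" and inS: "(x, w) \<in> S"
  from open_prod_elim[OF S inS] obtain U V where UV: "open U" "open V" "(x, w) \<in> U \<times> V" "U \<times> V \<subseteq> S"
    by blast
  have "open (F s ` U \<times> V)" using op s UV by (auto intro: open_Times)
  moreover have "(F s x, w) \<in> F s ` U \<times> V" using UV by auto
  ultimately have "orbit_rel T F \<inter> (F s ` U \<times> V) \<noteq> {}"
    using sw unfolding closure_iff_nhds_not_empty by blast
  then obtain b t where bt: "b \<in> U" "t \<in> T" "F t (F s b) \<in> V"
    by (auto simp: orbit_rel_iff)
  have "(b, F (s + t) b) \<in> orbit_rel T F" using sf_Tadd[OF sf s bt(2)] by (auto simp: orbit_rel_iff)
  moreover have "(b, F (s + t) b) \<in> U \<times> V" using bt sf_comp[OF sf s bt(2)] by simp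
  ultimately show "orbit_rel T F \<inter> A \<noteq> {}" using UV SA by blast
qed

theorem proposition10:
  fixes T :: "real set" and F :: "real \<Rightarrow> 'a::metric_space \<Rightarrow> 'a"
  assumes "semiflow T F" and "connected (UNIV :: 'a set)"
  shows "forward_invariant T (prod_action F) (nonwandering_rel T F)
    \<and> (\<forall>x.
        forward_invariant T F (Down (nonwandering_rel T F) x)
      \<and> orbit T F x \<union> omega_limit T F x \<subseteq> Down (nonwandering_rel T F) x
      \<and> (omega_limit T F x \<noteq> {} \<longrightarrow>
           Down (nonwandering_rel T F) x
             \<subseteq> orbit T F x \<union> Down_set (nonwandering_rel T F) (omega_limit T F x))
      \<and> (\<forall>y\<in>orbit T F x.
           Down (nonwandering_rel T F) x \<subseteq> orbit T F x \<union> Down (nonwandering_rel T F) y)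
      \<and> ((\<forall>t\<in>T. \<forall>U. open U \<longrightarrow> open (F t ` U)) \<longrightarrow>
           (\<forall>y\<in>orbit T F x.
              Down (nonwandering_rel T F) x = orbit T F x \<union> Down (nonwandering_rel T F) y)))"
proof -
  let ?O = "orbit_rel T F"
  let ?NW = "nonwandering_rel T F"
  have sf: "semiflow T F" by (rule assms(1))
  have NW: "?NW = closure ?O" by (simp add: nonwandering_rel_def)
  have P0: "forward_invariant T (prod_action F) ?NW"
    unfolding forward_invariant_def NW using NW_prod_inv[OF sf] by blast
  have orb: "orbit T F x \<subseteq> Down ?NW x" for x
  proof
    fix y assume "y \<in> orbit T F x"
    then have "(x, y) \<in> ?O" by (simp add: orbit_rel_def)
    then show "y \<in> Down ?NW x" using closure_subset by (auto simp: Down_def NW)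
  qed
  have P1: "forward_invariant T F (Down ?NW x)" for x
    unfolding forward_invariant_def
  proof (intro ballI subsetI)
    fix t z assume t: "t \<in> T" and z: "z \<in> F t ` Down ?NW x"
    then obtain y where y: "(x, y) \<in> closure ?O" "z = F t y" by (auto simp: Down_def NW)
    then have "(\<lambda>p. (fst p, F t (snd p))) (x, y) \<in> closure ?O" using NW_down_inv[OF sf t] by blast
    then show "z \<in> Down ?NW x" using y by (simp add: Down_def NW)
  qed
  have P2: "orbit T F x \<union> omega_limit T F x \<subseteq> Down ?NW x" for x
  proof -
    have "omega_limit T F x \<subseteq> Down ?NW x"
    proof
      fix y assume "y \<in> omega_limit T F x"
      then obtain s where s: "\<And>n. s n \<in> T" "(\<lambda>n. F (s n) x) \<longlonglongrightarrow> y"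
        by (auto simp: omega_limit_def)
      have l: "(\<lambda>n. (x, F (s n) x)) \<longlonglongrightarrow> (x, y)" using s(2) by (intro tendsto_Pair tendsto_const)
      have m: "\<And>n. (x, F (s n) x) \<in> closure ?O"
        using s(1) closure_subset by (fastforce simp: orbit_rel_iff)
      have "(x, y) \<in> closure ?O" by (rule closed_sequentially[OF closed_closure m l])
      then show "y \<in> Down ?NW x" by (simp add: Down_def NW)
    qed
    then show ?thesis using orb by blast
  qed
  have P3: "omega_limit T F x \<noteq> {} \<longrightarrow> Down ?NW x \<subseteq> orbit T F x \<union> Down_set ?NW (omega_limit T F x)" for x
  proof (intro impI subsetI)
    fix y assume ne: "omega_limit T F x \<noteq> {}" and y: "y \<in> Down ?NW x"
    then obtain z where z: "z \<in> omega_limit T F x" by blast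
    then obtain s where s: "\<And>n. s n \<in> T" "(\<lambda>n. F (s n) x) \<longlonglongrightarrow> z"
      by (auto simp: omega_limit_def)
    have "(x, y) \<in> closure ?O" using y by (simp add: Down_def NW)
    from NW_key[OF sf this] show "y \<in> orbit T F x \<union> Down_set ?NW (omega_limit T F x)"
    proof
      assume all: "\<forall>s\<in>T. (F s x, y) \<in> closure ?O"
      have l: "(\<lambda>n. (F (s n) x, y)) \<longlonglongrightarrow> (z, y)" using s(2) by (intro tendsto_Pair tendsto_const)
      have m: "\<And>n. (F (s n) x, y) \<in> closure ?O" using all s(1) by blast
      have "(z, y) \<in> closure ?O" by (rule closed_sequentially[OF closed_closure m l])
      then show ?thesis using z by (auto simp: Down_set_def Down_def NW)
    qed simp
  qed
  have P4: "\<forall>y\<in>orbit T F x. Down ?NW x \<subseteq> orbit T F x \<union> Down ?NW y" for x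
  proof (intro ballI subsetI)
    fix y w assume y: "y \<in> orbit T F x" and w: "w \<in> Down ?NW x"
    then obtain s where s: "s \<in> T" "y = F s x" by (auto simp: orbit_def)
    have "(x, w) \<in> closure ?O" using w by (simp add: Down_def NW)
    from NW_key[OF sf this] show "w \<in> orbit T F x \<union> Down ?NW y"
      using s by (auto simp: Down_def NW)
  qed
  have P5: "(\<forall>t\<in>T. \<forall>U. open U \<longrightarrow> open (F t ` U)) \<longrightarrow>
           (\<forall>y\<in>orbit T F x. Down ?NW x = orbit T F x \<union> Down ?NW y)" for x
  proof (intro impI ballI equalityI)
    fix y assume op: "\<forall>t\<in>T. \<forall>U. open U \<longrightarrow> open (F t ` U)" and y: "y \<in> orbit T F x"
    show "Down ?NW x \<subseteq> orbit T F x \<union> Down ?NW y" using P4 y by blast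
    obtain s where s: "s \<in> T" "y = F s x" using y by (auto simp: orbit_def)
    have "Down ?NW y \<subseteq> Down ?NW x"
    proof
      fix w assume "w \<in> Down ?NW y"
      then have "(F s x, w) \<in> closure ?O" using s by (simp add: Down_def NW)
      from NW_open[OF sf op s(1) this] show "w \<in> Down ?NW x" by (simp add: Down_def NW)
    qed
    then show "orbit T F x \<union> Down ?NW y \<subseteq> Down ?NW x" using orb by blast
  qed
  show ?thesis
  proof (intro conjI allI)
    show "forward_invariant T (prod_action F) ?NW" by (rule P0)
  next
    fix x
    show "forward_invariant T F (Down ?NW x)" by (rule P1)
    show "orbit T F x \<union> omega_limit T F x \<subseteq> Down ?NW x" by (rule P2)
    show "omega_limit T F x \<noteq> {} \<longrightarrow> Down ?NW x \<subseteq> orbit T F x \<union> Down_set ?NW (omega_limit T F x)" by (rule P3)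
    show "\<forall>y\<in>orbit T F x. Down ?NW x \<subseteq> orbit T F x \<union> Down ?NW y" by (rule P4)
    show "(\<forall>t\<in>T. \<forall>U. open U \<longrightarrow> open (F t ` U)) \<longrightarrow>
           (\<forall>y\<in>orbit T F x. Down ?NW x = orbit T F x \<union> Down ?NW y)" by (rule P5)
  qed
qed

end
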